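(* Let $s>0$ and let $(X,d)$ be a compact monotone metric space with $\mathcal{H}^s(X)>0$. Then there exists an $s$-Hölder function $g:X\to\mathbb{R}$ such that $g(X)$ is a non-degenerate closed interval.
   Context: A metric space $(X,d)$ is monotone if there exist a linear order $<$ on $X$ and a constant $C$ such that $\operatorname{diam}([a,b])\le C\,d(a,b)$ for all $a,b\in X$, where $[a,b]=\{x\in X: a\le x\le b\}$; it is then called $C$-monotone. $\mathcal{H}^s$ denotes the $s$-dimensional Hausdorff measure. A function $g$ is $s$-Hölder if there is $K$ with $|g(a)-g(b)|\le K\,d(a,b)^s$ for all $a,b$. *)

theory Defs
  imports "HOL-Analysis.Analysis"
begin

definition order_interval :: "'a rel \<Rightarrow> 'a set \<Rightarrow> 'a \<Rightarrow> 'a \<Rightarrow> 'a set" where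
  "order_interval r X a b = {x \<in> X. (a, x) \<in> r \<and> (x, b) \<in> r}"

definition monotone_metric :: "'a::metric_space set \<Rightarrow> bool" where
  "monotone_metric X \<longleftrightarrow> (\<exists>r C. linear_order_on X r \<and>
      (\<forall>a\<in>X. \<forall>b\<in>X. diameter (order_interval r X a b) \<le> C * dist a b))"

definition hausdorff_pre :: "real \<Rightarrow> real \<Rightarrow> 'a::metric_space set \<Rightarrow> ennreal" where
  "hausdorff_pre s \<delta> A = (INF U \<in> {U :: nat \<Rightarrow> 'a set. A \<subseteq> (\<Union>i. U i) \<and>
       (\<forall>i. bounded (U i) \<and> diameter (U i) \<le> \<delta>)}. (\<Sum>i. ennreal (diameter (U i) powr s)))"

definition hausdorff_measure :: "real \<Rightarrow> 'a::metric_space set \<Rightarrow> ennreal" where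
  "hausdorff_measure s A = (SUP \<delta> \<in> {0<..}. hausdorff_pre s \<delta> A)"

definition holder_on :: "real \<Rightarrow> 'a::metric_space set \<Rightarrow> ('a \<Rightarrow> real) \<Rightarrow> bool" where
  "holder_on s X g \<longleftrightarrow> (\<exists>K. \<forall>a\<in>X. \<forall>b\<in>X. \<bar>g a - g b\<bar> \<le> K * dist a b powr s)"

end

theory Submission
  imports Defs
begin

lemma pre_mono: "A \<subseteq> B \<Longrightarrow> hausdorff_pre s \<delta> A \<le> hausdorff_pre s \<delta> B"
  unfolding hausdorff_pre_def by (rule INF_superset_mono) auto

lemma pre_empty: "\<delta> \<ge> 0 \<Longrightarrow> hausdorff_pre s \<delta> {} = 0"
proof -
  assume d: "\<delta> \<ge> 0"
  have "hausdorff_pre s \<delta> {} \<le> (\<Sum>i. ennreal (diameter ((\<lambda>i. {}::'a set) i) powr s))"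
    unfolding hausdorff_pre_def by (rule INF_lower2[of "\<lambda>i. {}"]) (auto simp: d)
  also have "\<dots> = 0" by simp
  finally show ?thesis by simp
qed

lemma pre_add:
  fixes A B :: "'a::metric_space set"
  assumes "bounded B" "diameter B \<le> \<delta>"
  shows "hausdorff_pre s \<delta> (A \<union> B) \<le> hausdorff_pre s \<delta> A + ennreal (diameter B powr s)"
proof -
  define I where "I = {U :: nat \<Rightarrow> 'a set. A \<subseteq> (\<Union>i. U i) \<and>
       (\<forall>i. bounded (U i) \<and> diameter (U i) \<le> \<delta>)}"
  define c where "c = ennreal (diameter B powr s)"
  have pA: "hausdorff_pre s \<delta> A = (INF U\<in>I. (\<Sum>i. ennreal (diameter (U i) powr s)))"
    unfolding hausdorff_pre_def I_def ..
  show ?thesis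
  proof (cases "I = {}")
    case True
    then show ?thesis using pA by simp
  next
    case False
    have "hausdorff_pre s \<delta> (A \<union> B) \<le> (INF U\<in>I. c + (\<Sum>i. ennreal (diameter (U i) powr s)))"
    proof (rule INF_greatest)
      fix U assume U: "U \<in> I"
      define V where "V = case_nat B U"
      have "hausdorff_pre s \<delta> (A \<union> B) \<le> (\<Sum>i. ennreal (diameter (V i) powr s))"
        unfolding hausdorff_pre_def
      proof (rule INF_lower)
        show "V \<in> {U. A \<union> B \<subseteq> (\<Union>i. U i) \<and> (\<forall>i. bounded (U i) \<and> diameter (U i) \<le> \<delta>)}"
        proof (intro CollectI conjI allI)
          show "A \<union> B \<subseteq> (\<Union>i. V i)"
          proof
            fix x assume "x \<in> A \<union> B"
            then show "x \<in> (\<Union>i. V i)"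
            proof
              assume "x \<in> A"
              then obtain i where "x \<in> U i" using U unfolding I_def by blast
              then show ?thesis unfolding V_def by (intro UN_I[of "Suc i"]) auto
            next
              assume "x \<in> B"
              then show ?thesis unfolding V_def by (intro UN_I[of 0]) auto
            qed
          qed
          fix i show "bounded (V i)" "diameter (V i) \<le> \<delta>"
            using U assms unfolding I_def V_def by (cases i; simp)+
        qed
      qed
      also have "\<dots> = c + (\<Sum>i. ennreal (diameter (U i) powr s))"
      proof -
        let ?f = "\<lambda>i. ennreal (diameter (V i) powr s)"
        have "(\<Sum>i. ?f i) = ?f 0 + (\<Sum>i. ?f (Suc i))"
        proof -
          have "(\<lambda>n. ?f (Suc n)) sums (\<Sum>i. ?f (Suc i))" by (rule summable_sums[OF summableI])
          then have "?f sums ((\<Sum>i. ?f (Suc i)) + ?f 0)" by (rule sums_Suc)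
          then show ?thesis by (simp add: sums_iff add.commute)
        qed
        then show ?thesis by (simp add: V_def c_def)
      qed
      finally show "hausdorff_pre s \<delta> (A \<union> B) \<le> c + (\<Sum>i. ennreal (diameter (U i) powr s))" .
    qed
    also have "\<dots> = c + hausdorff_pre s \<delta> A"
    proof -
      let ?F = "\<lambda>U. (\<Sum>i. ennreal (diameter (U i) powr s))"
      have m: "mono (\<lambda>x::ennreal. c + x)" by (auto simp: mono_def add_left_mono)
      have ct: "continuous (at_right (Inf (?F ` I))) (\<lambda>x. c + x)" by (intro continuous_intros)
      have "c + Inf (?F ` I) = Inf ((\<lambda>x. c + x) ` (?F ` I))"
        by (rule continuous_at_Inf_mono[OF m ct]) (auto simp: False bdd_below_def intro!: exI[of _ 0])
      then show ?thesis unfolding pA by (simp add: image_image)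
    qed
    finally show ?thesis by (simp add: c_def add.commute)
  qed
qed

lemma pre_single:
  fixes B :: "'a::metric_space set"
  assumes "bounded B" "diameter B \<le> \<delta>"
  shows "hausdorff_pre s \<delta> B \<le> ennreal (diameter B powr s)"
  using pre_add[OF assms, where A="{}" and s=s]
  by (simp add: pre_empty[OF order_trans[OF diameter_ge_0[OF assms(1)] assms(2)]])


lemma lin_props:
  assumes "linear_order_on X r"
  shows "trans r" "\<forall>x\<in>X. (x,x)\<in>r" "total_on X r" "antisym r"
  using assms unfolding linear_order_on_def partial_order_on_def preorder_on_def refl_on_def by simp_all

lemma finite_max_rel:
  assumes lin: "linear_order_on X r" and "finite S" "S \<noteq> {}" "S \<subseteq> X"
  shows "\<exists>m\<in>S. \<forall>x\<in>S. (x, m) \<in> r"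
  using assms(2-4)
proof (induction S rule: finite_ne_induct)
  case (singleton x)
  then show ?case using lin_props(2)[OF lin] by simp
next
  case (insert x F)
  have FX: "F \<subseteq> X" and xX: "x \<in> X" using insert.prems by auto
  obtain m where m: "m \<in> F" "\<forall>y\<in>F. (y, m) \<in> r" using insert.IH[OF FX] by blast
  have xm: "x \<in> X" "m \<in> X" using xX FX m(1) by auto
  note tr = lin_props(1)[OF lin] and rf = lin_props(2)[OF lin] and tot = lin_props(3)[OF lin]
  show ?case
  proof (cases "(x, m) \<in> r")
    case True
    then have "\<forall>y\<in>insert x F. (y,m)\<in>r" using m(2) by simp
    then show ?thesis using m(1) by blast
  next
    case False
    have "x \<noteq> m" using False rf xm by auto
    then have "(m, x) \<in> r" using tot xm False unfolding total_on_def by blast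
    then have "\<forall>y\<in>insert x F. (y,x)\<in>r" using m(2) transD[OF tr] rf xX by blast
    then show ?thesis by blast
  qed
qed

lemma ray_closed:
  fixes X :: "'a::metric_space set"
  assumes lin: "linear_order_on X r" and cX: "compact X"
    and mon: "\<forall>a\<in>X. \<forall>b\<in>X. diameter (order_interval r X a b) \<le> C * dist a b"
    and x: "x \<in> X"
  shows "closed {y\<in>X. (x,y)\<in>r}"
proof (unfold closed_sequential_limits, intro allI impI, elim conjE)
  fix f l assume f: "\<forall>n. f n \<in> {y \<in> X. (x, y) \<in> r}" and lim: "f \<longlonglongrightarrow> l"
  note tr = lin_props(1)[OF lin] and rf = lin_props(2)[OF lin] and tot = lin_props(3)[OF lin]
  have lX: "l \<in> X" using closed_sequentially[OF compact_imp_closed[OF cX]] f lim by auto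
  show "l \<in> {y \<in> X. (x, y) \<in> r}"
  proof (rule ccontr)
    assume "l \<notin> {y \<in> X. (x, y) \<in> r}"
    then have nl: "(x,l) \<notin> r" using lX by auto
    have xl: "x \<noteq> l" using nl rf lX by auto
    then have "(l,x) \<in> r" using tot lX x nl unfolding total_on_def by blast
    note lx = this xl
    have bd: "\<And>n. dist x l \<le> C * dist l (f n)"
    proof -
      fix n
      have fn: "f n \<in> X" "(x, f n) \<in> r" using f by auto
      have "x \<in> order_interval r X l (f n)" "l \<in> order_interval r X l (f n)"
        using fn lx x lX rf transD[OF tr, of l x "f n"] unfolding order_interval_def by simp_all
      moreover have "bounded (order_interval r X l (f n))"
        using compact_imp_bounded[OF cX] by (rule bounded_subset) (auto simp: order_interval_def)
      ultimately have "dist x l \<le> diameter (order_interval r X l (f n))"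
        by (intro diameter_bounded_bound) auto
      also have "\<dots> \<le> C * dist l (f n)" using mon[rule_format, OF lX fn(1)] .
      finally show "dist x l \<le> C * dist l (f n)" .
    qed
    have "(\<lambda>n. dist (f n) l) \<longlonglongrightarrow> 0" using tendsto_dist_iff[THEN iffD1, OF lim] .
    then have "(\<lambda>n. C * dist (f n) l) \<longlonglongrightarrow> 0" by (rule tendsto_mult_right_zero)
    moreover have "\<forall>n. dist x l \<le> C * dist (f n) l" using bd by (simp add: dist_commute)
    then have "\<exists>N. \<forall>n\<ge>N. dist x l \<le> C * dist (f n) l" by blast
    ultimately have "dist x l \<le> 0" by (rule LIMSEQ_le_const)
    then show False using lx by simp
  qed
qed

lemma order_interval_conv: "order_interval (r\<inverse>) X a b = order_interval r X b a"
  unfolding order_interval_def by auto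

lemma max_exists:
  fixes X :: "'a::metric_space set"
  assumes lin: "linear_order_on X r" and cX: "compact X"
    and mon: "\<forall>a\<in>X. \<forall>b\<in>X. diameter (order_interval r X a b) \<le> C * dist a b"
    and A: "closed A" "A \<subseteq> X" "A \<noteq> {}"
  shows "\<exists>a\<in>A. \<forall>y\<in>A. (y,a)\<in>r"
proof -
  have cA: "compact A" using A cX compact_Int_closed[of X A] by (simp add: Int_absorb1)
  let ?F = "(\<lambda>x. {y\<in>X. (x,y)\<in>r}) ` A"
  have "A \<inter> \<Inter> ?F \<noteq> {}"
  proof (rule compact_imp_fip[OF cA])
    show "\<And>T. T \<in> ?F \<Longrightarrow> closed T" using ray_closed[OF lin cX mon] A by auto
  next
    fix F' assume F': "finite F'" "F' \<subseteq> ?F"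
    then obtain S where S: "S \<subseteq> A" "finite S" "F' = (\<lambda>x. {y\<in>X. (x,y)\<in>r}) ` S"
      by (meson finite_subset_image)
    show "A \<inter> \<Inter> F' \<noteq> {}"
    proof (cases "S = {}")
      case True then show ?thesis using S A by auto
    next
      case False
      obtain m where "m \<in> S" "\<forall>x\<in>S. (x, m) \<in> r"
        using finite_max_rel[OF lin S(2) False] S A by auto
      then have "m \<in> A \<inter> \<Inter> F'" using S A by auto
      then show ?thesis by blast
    qed
  qed
  then obtain a where "a \<in> A" "a \<in> \<Inter> ?F" by blast
  then show ?thesis by auto
qed

lemma min_exists:
  fixes X :: "'a::metric_space set"
  assumes lin: "linear_order_on X r" and cX: "compact X"
    and mon: "\<forall>a\<in>X. \<forall>b\<in>X. diameter (order_interval r X a b) \<le> C * dist a b"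
    and A: "closed A" "A \<subseteq> X" "A \<noteq> {}"
  shows "\<exists>a\<in>A. \<forall>y\<in>A. (a,y)\<in>r"
proof -
  have "\<forall>a\<in>X. \<forall>b\<in>X. diameter (order_interval (r\<inverse>) X a b) \<le> C * dist a b"
  proof (intro ballI)
    fix a b assume "a \<in> X" "b \<in> X"
    then have "diameter (order_interval r X b a) \<le> C * dist b a" using mon by blast
    then show "diameter (order_interval (r\<inverse>) X a b) \<le> C * dist a b"
      by (simp add: order_interval_conv dist_commute)
  qed
  from max_exists[OF _ cX this A] lin show ?thesis by (simp add: linear_order_on_converse)
qed


lemma pre_pos:
  fixes X :: "'a::metric_space set"
  assumes s: "s > 0" and H: "hausdorff_measure s X > 0"
  shows "hausdorff_pre s D X > 0"
proof (rule ccontr)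
  assume "\<not> hausdorff_pre s D X > 0"
  then have z: "hausdorff_pre s D X = 0" by (simp add: not_gr_zero)
  have "\<And>\<delta>. \<delta> \<in> {0<..} \<Longrightarrow> hausdorff_pre s \<delta> X = 0"
  proof -
    fix \<delta> :: real assume "\<delta> \<in> {0<..}"
    then have d: "\<delta> > 0" by simp
    have "hausdorff_pre s \<delta> X \<le> 0"
    proof (rule ennreal_le_epsilon)
      fix e :: real assume e: "0 < e"
      define \<eta> where "\<eta> = min e (\<delta> powr s)"
      have eta: "\<eta> > 0" using e d by (simp add: \<eta>_def)
      have "hausdorff_pre s D X < ennreal \<eta>" using z eta by simp
      then obtain U where U: "X \<subseteq> (\<Union>i. U i)" "\<forall>i. bounded (U i) \<and> diameter (U i) \<le> D"
        and sU: "(\<Sum>i. ennreal (diameter (U i) powr s)) < ennreal \<eta>"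
        unfolding hausdorff_pre_def INF_less_iff by blast
      have small: "diameter (U i) \<le> \<delta>" for i
      proof (rule ccontr)
        assume "\<not> diameter (U i) \<le> \<delta>"
        then have "\<delta> powr s \<le> diameter (U i) powr s"
          using d s by (intro powr_mono2) auto
        moreover have "ennreal (diameter (U i) powr s) < ennreal \<eta>"
          using ennreal_suminf_lessD[OF sU] .
        then have "diameter (U i) powr s < \<eta>"
          by (simp add: ennreal_less_iff)
        ultimately show False unfolding \<eta>_def by linarith
      qed
      have "hausdorff_pre s \<delta> X \<le> (\<Sum>i. ennreal (diameter (U i) powr s))"
        unfolding hausdorff_pre_def by (rule INF_lower) (use U small in auto)
      also have "\<dots> \<le> ennreal \<eta>" using sU by simp
      also have "\<dots> \<le> 0 + ennreal e" unfolding \<eta>_def by (simp add: ennreal_leI)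
      finally show "hausdorff_pre s \<delta> X \<le> 0 + ennreal e" .
    qed
    then show "hausdorff_pre s \<delta> X = 0" by simp
  qed
  then have "hausdorff_measure s X = 0"
    unfolding hausdorff_measure_def by simp
  then show False using H by simp
qed


lemma holder_cont:
  fixes g :: "'a::metric_space \<Rightarrow> real"
  assumes s: "s > 0" and K: "K \<ge> 0"
    and h: "\<forall>a\<in>X. \<forall>b\<in>X. \<bar>g a - g b\<bar> \<le> K * dist a b powr s"
  shows "continuous_on X g"
  unfolding continuous_on_iff
proof (intro ballI allI impI)
  fix x e assume x: "x \<in> X" and e: "(e::real) > 0"
  define d where "d = (e / (K + 1)) powr (1 / s)"
  have d0: "d > 0" using e K by (simp add: d_def)
  have ds: "d powr s = e / (K + 1)"
    using e K s by (simp add: d_def powr_powr)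
  show "\<exists>d>0. \<forall>x'\<in>X. dist x' x < d \<longrightarrow> dist (g x') (g x) < e"
  proof (intro exI[of _ d] conjI ballI impI)
    fix x' assume x': "x' \<in> X" and dx: "dist x' x < d"
    have "dist x' x powr s \<le> d powr s"
      using dx s by (intro powr_mono2) auto
    then have "K * dist x' x powr s \<le> K * (e / (K + 1))"
      using K ds by (intro mult_left_mono) auto
    also have "\<dots> < e"
      using K e by (simp add: field_simps)
    finally show "dist (g x') (g x) < e"
      using h x x' by (simp add: dist_real_def) (meson le_less_trans)
  qed (fact d0)
qed


theorem theorem2p1:
  fixes X :: "'a::metric_space set" and s :: real
  assumes "s > 0" and "compact X" and "monotone_metric X"
    and "hausdorff_measure s X > 0"
  shows "\<exists>g :: 'a \<Rightarrow> real. holder_on s X g \<and> (\<exists>c e. c < e \<and> g ` X = {c..e})"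
proof -
  note s = assms(1) and cX = assms(2) and H = assms(4)
  obtain r C0 where lin: "linear_order_on X r"
    and mon0: "\<forall>a\<in>X. \<forall>b\<in>X. diameter (order_interval r X a b) \<le> C0 * dist a b"
    using assms(3) unfolding monotone_metric_def by blast
  define C where "C = max C0 1"
  have C1: "C \<ge> 1" by (simp add: C_def)
  have mon: "\<forall>a\<in>X. \<forall>b\<in>X. diameter (order_interval r X a b) \<le> C * dist a b"
  proof (intro ballI)
    fix a b assume "a \<in> X" "b \<in> X"
    then have "diameter (order_interval r X a b) \<le> C0 * dist a b" using mon0 by blast
    also have "\<dots> \<le> C * dist a b" unfolding C_def by (intro mult_right_mono) auto
    finally show "diameter (order_interval r X a b) \<le> C * dist a b" .
  qed
  note tr = lin_props(1)[OF lin] and rf = lin_props(2)[OF lin] and tot = lin_props(3)[OF lin]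
    and asy = lin_props(4)[OF lin]
  have bX: "bounded X" using cX by (rule compact_imp_bounded)
  have clX: "closed X" using cX by (rule compact_imp_closed)
  have Xne: "X \<noteq> {}"
  proof
    assume "X = {}"
    then have "hausdorff_pre s 0 X = 0" using pre_empty[of 0 s] by simp
    with pre_pos[OF s H, of 0] show False by simp
  qed
  define D where "D = diameter X"
  define \<nu> :: "'a set \<Rightarrow> ennreal" where "\<nu> = hausdorff_pre s D"
  have \<nu>pos: "\<nu> X > 0" unfolding \<nu>_def by (rule pre_pos[OF s H])
  have \<nu>fin: "\<nu> A < top" if "A \<subseteq> X" for A
  proof -
    have "\<nu> A \<le> \<nu> X" unfolding \<nu>_def by (rule pre_mono[OF that])
    also have "\<dots> \<le> ennreal (diameter X powr s)" unfolding \<nu>_def D_def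
      by (rule pre_single[OF bX]) simp
    also have "\<dots> < top" by simp
    finally show ?thesis .
  qed
  define down :: "'a \<Rightarrow> 'a set" where "down x = {y\<in>X. (y,x)\<in>r}" for x
  define g :: "'a \<Rightarrow> real" where "g x = enn2real (\<nu> (down x))" for x
  define Hs :: "'a \<Rightarrow> 'a \<Rightarrow> 'a set" where "Hs a b = {x\<in>X. (a,x)\<in>r \<and> x \<noteq> a \<and> (x,b)\<in>r}" for a b
  have downX: "down x \<subseteq> X" for x unfolding down_def by auto
  have g0: "g x \<ge> 0" for x unfolding g_def by simp
  have gE: "\<nu> (down x) = ennreal (g x)" for x
    unfolding g_def using \<nu>fin[OF downX] by simp
  have K1: "g b \<le> g a + diameter (Hs a b) powr s"
    if ab: "a \<in> X" "b \<in> X" "(a,b)\<in>r" for a b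
  proof -
    have sub: "down b \<subseteq> down a \<union> Hs a b"
    proof
      fix y assume "y \<in> down b"
      then have y: "y \<in> X" "(y,b)\<in>r" unfolding down_def by auto
      show "y \<in> down a \<union> Hs a b"
      proof (cases "(y,a)\<in>r")
        case True then show ?thesis using y unfolding down_def by simp
      next
        case False
        then have "y \<noteq> a" using rf ab(1) by auto
        then have "(a,y)\<in>r" using tot y(1) ab(1) False unfolding total_on_def by blast
        then show ?thesis using y \<open>y \<noteq> a\<close> unfolding Hs_def by simp
      qed
    qed
    have Hsub: "Hs a b \<subseteq> X" unfolding Hs_def by auto
    have bH: "bounded (Hs a b)" using bX Hsub by (rule bounded_subset)
    have dH: "diameter (Hs a b) \<le> D" unfolding D_def using Hsub bX by (rule diameter_subset)
    have "\<nu> (down b) \<le> \<nu> (down a \<union> Hs a b)" unfolding \<nu>_def by (rule pre_mono[OF sub])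
    also have "\<dots> \<le> \<nu> (down a) + ennreal (diameter (Hs a b) powr s)"
      unfolding \<nu>_def by (rule pre_add[OF bH dH])
    also have "\<dots> = ennreal (g a + diameter (Hs a b) powr s)"
      by (simp add: gE ennreal_plus g0)
    finally have "\<nu> (down b) \<le> ennreal (g a + diameter (Hs a b) powr s)" .
    then show ?thesis unfolding g_def by (intro enn2real_leI) (simp_all add: g0)
  qed
  have gmono: "g a \<le> g b" if ab: "a \<in> X" "b \<in> X" "(a,b)\<in>r" for a b
  proof -
    have "down a \<subseteq> down b" unfolding down_def using transD[OF tr _ ab(3)] by auto
    then have "\<nu> (down a) \<le> \<nu> (down b)" unfolding \<nu>_def by (rule pre_mono)
    then show ?thesis unfolding g_def by (rule enn2real_mono) (rule \<nu>fin[OF downX])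
  qed
  define K where "K = C powr s"
  have hol1: "\<bar>g a - g b\<bar> \<le> K * dist a b powr s"
    if ab: "a \<in> X" "b \<in> X" "(a,b)\<in>r" for a b
  proof -
    have Hsub: "Hs a b \<subseteq> order_interval r X a b" unfolding Hs_def order_interval_def by auto
    have bI: "bounded (order_interval r X a b)"
      using bX by (rule bounded_subset) (auto simp: order_interval_def)
    have bH: "bounded (Hs a b)" using bI Hsub by (rule bounded_subset)
    have "diameter (Hs a b) \<le> diameter (order_interval r X a b)"
      using Hsub bI by (rule diameter_subset)
    also have "\<dots> \<le> C * dist a b" using mon ab by blast
    finally have "diameter (Hs a b) powr s \<le> (C * dist a b) powr s"
      using s bH by (intro powr_mono2) (auto simp: diameter_ge_0)
    also have "\<dots> = K * dist a b powr s" unfolding K_def using C1 by (simp add: powr_mult)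
    finally have "g b - g a \<le> K * dist a b powr s" using K1[OF ab] by linarith
    moreover have "g a \<le> g b" using gmono[OF ab] .
    ultimately show ?thesis by simp
  qed
  have hol: "\<forall>a\<in>X. \<forall>b\<in>X. \<bar>g a - g b\<bar> \<le> K * dist a b powr s"
  proof (intro ballI)
    fix a b assume a: "a \<in> X" and b: "b \<in> X"
    show "\<bar>g a - g b\<bar> \<le> K * dist a b powr s"
    proof (cases "(a,b)\<in>r")
      case True then show ?thesis using hol1 a b by blast
    next
      case False
      then have "a \<noteq> b" using rf a by auto
      then have "(b,a)\<in>r" using tot a b False unfolding total_on_def by blast
      then have "\<bar>g b - g a\<bar> \<le> K * dist b a powr s" using hol1 a b by blast
      then show ?thesis by (simp add: abs_minus_commute dist_commute)
    qed
  qed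
  have K0: "K \<ge> 0" unfolding K_def by simp
  have gcont: "continuous_on X g" by (rule holder_cont[OF s K0 hol])
  obtain m0 where m0: "m0 \<in> X" "\<forall>y\<in>X. (m0,y)\<in>r"
    using min_exists[OF lin cX mon clX order_refl Xne] by blast
  obtain m1 where m1: "m1 \<in> X" "\<forall>y\<in>X. (y,m1)\<in>r"
    using max_exists[OF lin cX mon clX order_refl Xne] by blast
  have gm0: "g m0 = 0"
  proof -
    have "down m0 \<subseteq> {m0}" using m0 asy unfolding down_def antisym_def by auto
    then have "\<nu> (down m0) \<le> \<nu> {m0}" unfolding \<nu>_def by (rule pre_mono)
    also have "\<dots> \<le> ennreal (diameter {m0} powr s)" unfolding \<nu>_def
      by (rule pre_single) (auto simp: D_def bX m0 diameter_ge_0)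
    also have "\<dots> = 0" by simp
    finally have "\<nu> (down m0) = 0" by simp
    then show ?thesis unfolding g_def by simp
  qed
  have gm1: "g m1 > 0"
  proof -
    have "down m1 = X" using m1 unfolding down_def by auto
    then show ?thesis unfolding g_def using \<nu>pos \<nu>fin[of X] by (simp add: enn2real_positive_iff)
  qed
  have img: "g ` X = {0..g m1}"
  proof
    show "g ` X \<subseteq> {0..g m1}" using g0 gmono m1 by auto
  next
    show "{0..g m1} \<subseteq> g ` X"
    proof
      fix t assume t: "t \<in> {0..g m1}"
      show "t \<in> g ` X"
      proof (rule ccontr)
        assume nt: "t \<notin> g ` X"
        define A where "A = {x\<in>X. g x \<le> t}"
        define B where "B = {x\<in>X. t \<le> g x}"
        have clA: "closed A" unfolding A_def
          by (rule continuous_on_closed_Collect_le[OF gcont continuous_on_const clX])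
        have clB: "closed B" unfolding B_def
          by (rule continuous_on_closed_Collect_le[OF continuous_on_const gcont clX])
        have m0A: "m0 \<in> A" using t gm0 m0 unfolding A_def by simp
        have m1B: "m1 \<in> B" using t m1 unfolding B_def by simp
        obtain a where a: "a \<in> A" "\<forall>y\<in>A. (y,a)\<in>r"
          using max_exists[OF lin cX mon clA _, of] m0A unfolding A_def by blast
        obtain b where b: "b \<in> B" "\<forall>y\<in>B. (b,y)\<in>r"
          using min_exists[OF lin cX mon clB _, of] m1B unfolding B_def by blast
        have aX: "a \<in> X" and bX': "b \<in> X" using a b unfolding A_def B_def by auto
        have gat: "g a < t" using a nt aX unfolding A_def by force
        have gbt: "t < g b" using b nt bX' unfolding B_def by force
        have ab: "(a,b)\<in>r"
        proof (rule ccontr)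
          assume "(a,b)\<notin>r"
          moreover have "a \<noteq> b" using gat gbt by auto
          ultimately have "(b,a)\<in>r" using tot aX bX' unfolding total_on_def by blast
          then have "g b \<le> g a" using gmono aX bX' by blast
          then show False using gat gbt by simp
        qed
        have HS: "Hs a b \<subseteq> {b}"
        proof
          fix x assume x: "x \<in> Hs a b"
          then have xX: "x \<in> X" and ax: "(a,x)\<in>r" and xa: "x \<noteq> a" and xb: "(x,b)\<in>r"
            unfolding Hs_def by auto
          show "x \<in> {b}"
          proof (cases "g x \<le> t")
            case True
            then have "x \<in> A" using xX unfolding A_def by simp
            then have "(x,a)\<in>r" using a by blast
            then have "x = a" using ax asy unfolding antisym_def by blast
            then show ?thesis using xa by simp
          next
            case False
            then have "x \<in> B" using xX unfolding B_def by simp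
            then have "(b,x)\<in>r" using b by blast
            then have "x = b" using xb asy unfolding antisym_def by blast
            then show ?thesis by simp
          qed
        qed
        have "diameter (Hs a b) \<le> diameter {b}" using HS by (rule diameter_subset) simp
        moreover have "diameter (Hs a b) \<ge> 0"
          using bounded_subset[OF _ HS] by (intro diameter_ge_0) simp
        ultimately have "diameter (Hs a b) = 0" by simp
        then have "g b \<le> g a" using K1[OF aX bX' ab] s by simp
        then show False using gat gbt by simp
      qed
    qed
  qed
  show ?thesis
    unfolding holder_on_def using hol img gm1 by blast
qed

end
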